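(* Assume $C^\top C\succ0$, let $\gamma>0$, $\sigma>0$, $\lambda>0$, and let $(\widetilde W_r)_{r\ge0}$ be generated by the alternating scheme of the context from a feasible initial point $\widetilde W_0\in\mathcal{X}_1$, $y_0\in\mathbb{R}^{mn}_+$. Let $H^\infty_\sigma=\lim_{r\to\infty}H_\sigma(\widetilde W_r)$ (the sequence $H_\sigma(\widetilde W_r)$ is nonincreasing and bounded below) and $H^*_\sigma=\inf_{\widetilde W}H_\sigma(\widetilde W)$. If $H^\infty_\sigma=H^*_\sigma$, then every cluster point of $(\widetilde W_r)$ belongs to $\operatorname{argmin}H_\sigma$.
   Context: Let $n,m,M\ge1$, $p=m+n$. For $i=1,\dots,M$ let $A_i\in\mathbb{R}^{n\times n}$, $B_{2,i}\in\mathbb{R}^{n\times m}$, $F_i=\begin{bmatrix}A_i&B_{2,i}\\0&0\end{bmatrix}$. Let $B_1\in\mathbb{R}^{n\times l}$, $C\in\mathbb{R}^{q\times n}$, $D\in\mathbb{R}^{q\times m}$ with $C^\top D=0$, $D^\top D\succ0$, $B_1B_1^\top\succ0$; $Q=\begin{bmatrix}B_1B_1^\top&0\\0&0\end{bmatrix}$, $R=\begin{bmatrix}C^\top C&0\\0&D^\top D\end{bmatrix}$, $V_1=[0,\ I_m]$, $V_2=[I_n,\ 0]$, $\Psi_i(W)=-V_2(F_iW+WF_i^\top+Q)V_2^\top$. $\mathrm{vec}$ is column-stacking; $\mathcal{P}:=V_2\otimes V_1$, so $\mathcal{P}\,\mathrm{vec}(W)=\mathrm{vec}(V_1WV_2^\top)$.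 $\Gamma^k_+=\{\mathrm{vec}(X):X\in\mathbb{S}^k_+\}$, $\delta_S$ the indicator of $S$, $\Omega=\{\mathrm{vec}(W):W_{ij}=0,\ 1\le i<j\le n\}$, $\mathcal{X}_1=\{\mathrm{vec}(W)\in\Gamma^p_+:\mathrm{vec}(\Psi_i(W))\in\Gamma^n_+\ \forall i,\ \mathrm{vec}(W)\in\Omega\}$, $r_1(\widetilde W)=\langle\mathrm{vec}(R),\widetilde W\rangle+\delta_{\mathcal{X}_1}(\widetilde W)$. For $x\in\mathbb{R}^{mn}$, $f_\sigma(x)=\sum_\ell(1-e^{-x_\ell/\sigma})$, $g_\sigma=-f_\sigma$, $g_\sigma^*$ its convex conjugate; $|\cdot|$ componentwise. $H_\sigma(\widetilde W)=r_1(\widetilde W)+\gamma f_\sigma(|\mathcal{P}\widetilde W|)$. Scheme: for $r=1,2,\dots$: if $r$ is odd, $\widetilde W_r=\widetilde W_{r-1}$ and $y_r=\operatorname{argmin}_{y\in\mathbb{R}^{mn}_+}\{\gamma g_\sigma^*(-y)+\gamma y^\top|\mathcal{P}\widetilde W_{r-1}|\}=\nabla f_\sigma(|\mathcal{P}\widetilde W_{r-1}|)$; if $r$ is even, $y_r=y_{r-1}$ and $\widetilde W_r\in\operatorname{argmin}_{\widetilde W\in\mathcal{X}_1}\{\langle\mathrm{vec}(R),\widetilde W\rangle+\gamma y_{r-1}^\top|\mathcal{P}\widetilde W|+\frac1{2\lambda}\|\widetilde W-\widetilde W_{r-1}\|^2\}$. *)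

theory Defs
  imports "HOL-Analysis.Analysis"
begin

text \<open>Index types: 'n (linearly ordered, representing 1..n), 'm, 'l, 'q finite.
  The p x p matrices (p = n + m) are indexed by 'n + 'm: Inl i is the i-th of the first n
  indices, Inr k the (n+k)-th. Vectorisation vec(W) in R^(p^2) is identified with W itself:
  the Euclidean inner product on R^(p^2) becomes the Frobenius inner product and the
  Euclidean norm the Frobenius norm (which is the norm of real^'p^'p). Vectors in R^(mn)
  (images of the map P) are m x n matrices real^'n^'m.\<close>

text \<open>rmat 'b 'a = real matrices with rows indexed by 'a and columns by 'b
  (the same as real^'b^'a, written without the ^ syntax so that sort constraints such as
  linorder can be attached to index variables).\<close>
type_synonym ('b, 'a) rmat = "((real, 'b) vec, 'a) vec"

definition psd :: "real^('k::finite)^'k \<Rightarrow> bool" where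
  "psd X \<longleftrightarrow> transpose X = X \<and> (\<forall>x. 0 \<le> x \<bullet> (X *v x))"

definition posdef :: "real^('k::finite)^'k \<Rightarrow> bool" where
  "posdef X \<longleftrightarrow> transpose X = X \<and> (\<forall>x. x \<noteq> 0 \<longrightarrow> 0 < x \<bullet> (X *v x))"

definition V1 :: "real^('n::finite + 'm::finite)^'m" where
  "V1 = (\<chi> j k. case k of Inl _ \<Rightarrow> 0 | Inr k' \<Rightarrow> (if k' = j then 1 else 0))"

definition V2 :: "real^('n::finite + 'm::finite)^'n" where
  "V2 = (\<chi> i k. case k of Inl k' \<Rightarrow> (if k' = i then 1 else 0) | Inr _ \<Rightarrow> 0)"

definition Fmat :: "real^('n::finite)^'n \<Rightarrow> real^('m::finite)^'n \<Rightarrow> real^('n + 'm)^('n + 'm)" where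
  "Fmat A B2 = (\<chi> a b. case a of
      Inl i \<Rightarrow> (case b of Inl j \<Rightarrow> A $ i $ j | Inr k \<Rightarrow> B2 $ i $ k)
    | Inr _ \<Rightarrow> 0)"

definition Qmat :: "real^('l::finite)^'n::finite \<Rightarrow> real^('n + 'm::finite)^('n + 'm)" where
  "Qmat B1 = (\<chi> a b. case (a, b) of
      (Inl i, Inl j) \<Rightarrow> (B1 ** transpose B1) $ i $ j
    | _ \<Rightarrow> 0)"

definition Rmat :: "real^('n::finite)^'q::finite \<Rightarrow> real^('m::finite)^'q \<Rightarrow> real^('n + 'm)^('n + 'm)" where
  "Rmat C D = (\<chi> a b. case (a, b) of
      (Inl i, Inl j) \<Rightarrow> (transpose C ** C) $ i $ j
    | (Inr i, Inr j) \<Rightarrow> (transpose D ** D) $ i $ j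
    | _ \<Rightarrow> 0)"

definition Psi :: "real^('n::finite)^'n \<Rightarrow> real^('m::finite)^'n \<Rightarrow> real^('l::finite)^'n
    \<Rightarrow> real^('n + 'm)^('n + 'm) \<Rightarrow> real^'n^'n" where
  "Psi A B2 B1 W = - (V2 ** (Fmat A B2 ** W + W ** transpose (Fmat A B2) + Qmat B1)
                       ** transpose V2)"

definition Omega :: "('n::{finite,linorder} + 'm::finite, 'n + 'm) rmat set" where
  "Omega = {W. \<forall>i j. i < j \<longrightarrow> W $ Inl i $ Inl j = 0}"

definition X1 :: "nat \<Rightarrow> (nat \<Rightarrow> ('n::{finite,linorder}, 'n) rmat) \<Rightarrow> (nat \<Rightarrow> ('m::finite, 'n) rmat)
    \<Rightarrow> ('l::finite, 'n) rmat \<Rightarrow> ('n + 'm, 'n + 'm) rmat set" where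
  "X1 M A B2 B1 = {W. psd W \<and> (\<forall>i\<in>{1..M}. psd (Psi (A i) (B2 i) B1 W)) \<and> W \<in> Omega}"

definition frob :: "real^('b::finite)^'a::finite \<Rightarrow> real^'b^'a \<Rightarrow> real" where
  "frob X Y = (\<Sum>i\<in>UNIV. \<Sum>j\<in>UNIV. X $ i $ j * Y $ i $ j)"

definition Pmap :: "real^('n::finite + 'm::finite)^('n + 'm) \<Rightarrow> real^'n^'m" where
  "Pmap W = V1 ** W ** transpose V2"

definition absm :: "real^('b::finite)^'a::finite \<Rightarrow> real^'b^'a" where
  "absm x = (\<chi> j k. \<bar>x $ j $ k\<bar>)"

definition fsig :: "real \<Rightarrow> real^('b::finite)^'a::finite \<Rightarrow> real" where
  "fsig \<sigma> x = (\<Sum>j\<in>UNIV. \<Sum>k\<in>UNIV. 1 - exp (- (x $ j $ k) / \<sigma>))"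

definition grad_fsig :: "real \<Rightarrow> real^('b::finite)^'a::finite \<Rightarrow> real^'b^'a" where
  "grad_fsig \<sigma> x = (\<chi> j k. exp (- (x $ j $ k) / \<sigma>) / \<sigma>)"

definition Hsig :: "nat \<Rightarrow> (nat \<Rightarrow> ('n::{finite,linorder}, 'n) rmat) \<Rightarrow> (nat \<Rightarrow> ('m::finite, 'n) rmat)
    \<Rightarrow> ('l::finite, 'n) rmat \<Rightarrow> ('n, 'q::finite) rmat \<Rightarrow> ('m, 'q) rmat \<Rightarrow> real \<Rightarrow> real
    \<Rightarrow> ('n + 'm, 'n + 'm) rmat \<Rightarrow> ereal" where
  "Hsig M A B2 B1 C D \<gamma> \<sigma> W =
     (if W \<in> X1 M A B2 B1
      then ereal (frob (Rmat C D) W + \<gamma> * fsig \<sigma> (absm (Pmap W)))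
      else \<infinity>)"

definition Wobj :: "real^('n::finite)^'q::finite \<Rightarrow> real^('m::finite)^'q \<Rightarrow> real \<Rightarrow> real \<Rightarrow> real^'n^'m
    \<Rightarrow> real^('n + 'm)^('n + 'm)
    \<Rightarrow> real^('n + 'm)^('n + 'm) \<Rightarrow> real" where
  "Wobj C D \<gamma> lam y Wprev W =
     frob (Rmat C D) W + \<gamma> * frob y (absm (Pmap W)) + (1 / (2 * lam)) * (norm (W - Wprev))\<^sup>2"

definition nonneg_mat :: "real^('b::finite)^'a::finite \<Rightarrow> bool" where
  "nonneg_mat y \<longleftrightarrow> (\<forall>j k. 0 \<le> y $ j $ k)"

end

theory Submission
  imports Defs
begin

lemma tendsto_mmult:
  fixes X :: "'z \<Rightarrow> real^('b::finite)^('a::finite)" and Y :: "'z \<Rightarrow> real^('c::finite)^'b"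
  assumes "(X \<longlongrightarrow> X0) F" "(Y \<longlongrightarrow> Y0) F"
  shows "((\<lambda>k. X k ** Y k) \<longlongrightarrow> X0 ** Y0) F"
  unfolding matrix_matrix_mult_def by (intro tendsto_intros assms)

lemma tendsto_transp:
  fixes X :: "'z \<Rightarrow> real^('b::finite)^('a::finite)"
  assumes "(X \<longlongrightarrow> X0) F"
  shows "((\<lambda>k. transpose (X k)) \<longlongrightarrow> transpose X0) F"
  unfolding transpose_def by (intro tendsto_intros assms)

lemma tendsto_mvec:
  fixes X :: "'z \<Rightarrow> real^('b::finite)^('a::finite)"
  assumes "(X \<longlongrightarrow> X0) F"
  shows "((\<lambda>k. X k *v x) \<longlongrightarrow> X0 *v x) F"
  unfolding matrix_vector_mult_def by (intro tendsto_intros assms)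

lemma tendsto_absm:
  fixes X :: "'z \<Rightarrow> real^('b::finite)^('a::finite)"
  assumes "(X \<longlongrightarrow> X0) F"
  shows "((\<lambda>k. absm (X k)) \<longlongrightarrow> absm X0) F"
  unfolding absm_def by (intro tendsto_intros assms)

lemma tendsto_frob:
  fixes X :: "'z \<Rightarrow> real^('b::finite)^('a::finite)"
  assumes "(X \<longlongrightarrow> X0) F"
  shows "((\<lambda>k. frob R (X k)) \<longlongrightarrow> frob R X0) F"
  unfolding frob_def by (intro tendsto_intros assms)

lemma tendsto_fsig:
  fixes X :: "'z \<Rightarrow> real^('b::finite)^('a::finite)"
  assumes "(X \<longlongrightarrow> X0) F"
  shows "((\<lambda>k. fsig \<sigma> (X k)) \<longlongrightarrow> fsig \<sigma> X0) F"
  unfolding fsig_def divide_inverse by (intro tendsto_intros assms)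

lemma psd_closed:
  fixes X :: "nat \<Rightarrow> real^('a::finite)^'a"
  assumes "X \<longlonglongrightarrow> X0" "\<And>k. psd (X k)"
  shows "psd X0"
proof -
  have "(\<lambda>k. transpose (X k)) \<longlonglongrightarrow> transpose X0" by (rule tendsto_transp[OF assms(1)])
  moreover have "(\<lambda>k. transpose (X k)) = X" using assms(2) unfolding psd_def by auto
  ultimately have t: "transpose X0 = X0" using assms(1) LIMSEQ_unique by metis
  have "0 \<le> x \<bullet> (X0 *v x)" for x
  proof (rule LIMSEQ_le_const)
    show "(\<lambda>k. x \<bullet> (X k *v x)) \<longlonglongrightarrow> x \<bullet> (X0 *v x)"
      by (intro tendsto_intros tendsto_mvec assms(1))
    show "\<exists>N. \<forall>n\<ge>N. 0 \<le> x \<bullet> (X n *v x)" using assms(2) unfolding psd_def by auto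
  qed
  with t show ?thesis unfolding psd_def by auto
qed

lemma Omega_closed:
  assumes "X \<longlonglongrightarrow> X0" "\<And>k. X k \<in> Omega"
  shows "X0 \<in> Omega"
  unfolding Omega_def
proof (intro CollectI allI impI)
  fix i j :: "'a::{finite,linorder}" assume "i < j"
  have "(\<lambda>k. X k $ Inl i $ Inl j) \<longlonglongrightarrow> X0 $ Inl i $ Inl j"
    by (intro tendsto_intros assms(1))
  moreover have "(\<lambda>k. X k $ Inl i $ Inl j) = (\<lambda>k. 0)" using assms(2) \<open>i<j\<close> unfolding Omega_def by auto
  ultimately show "X0 $ Inl i $ Inl j = 0" using LIMSEQ_unique tendsto_const by metis
qed

lemma X1_closed:
  assumes "X \<longlonglongrightarrow> X0" "\<And>k. X k \<in> X1 M A B2 B1"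
  shows "X0 \<in> X1 M A B2 B1"
proof -
  have "psd X0" using psd_closed[OF assms(1)] assms(2) unfolding X1_def by auto
  moreover have "X0 \<in> Omega" using Omega_closed[OF assms(1)] assms(2) unfolding X1_def by auto
  moreover have "psd (Psi (A i) (B2 i) B1 X0)" if "i \<in> {1..M}" for i
  proof (rule psd_closed)
    show "(\<lambda>k. Psi (A i) (B2 i) B1 (X k)) \<longlonglongrightarrow> Psi (A i) (B2 i) B1 X0"
      unfolding Psi_def
      by (intro tendsto_minus tendsto_mmult tendsto_add tendsto_const tendsto_transp assms(1))
    show "psd (Psi (A i) (B2 i) B1 (X k))" for k using assms(2) that unfolding X1_def by auto
  qed
  ultimately show ?thesis unfolding X1_def by auto
qed

lemma fsig_concave:
  assumes "\<sigma> > 0"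
  shows "fsig \<sigma> b \<le> fsig \<sigma> a + frob (grad_fsig \<sigma> a) b - frob (grad_fsig \<sigma> a) a"
proof -
  have c: "1 - exp (- u / \<sigma>) \<le> 1 - exp (- v / \<sigma>) + exp (- v / \<sigma>) / \<sigma> * u - exp (- v / \<sigma>) / \<sigma> * v"
    for u v :: real
  proof -
    have "1 + (- (u - v) / \<sigma>) \<le> exp (- (u - v) / \<sigma>)" by (rule exp_ge_add_one_self)
    hence "exp (- v / \<sigma>) * (1 + (- (u - v) / \<sigma>)) \<le> exp (- v / \<sigma>) * exp (- (u - v) / \<sigma>)"
      by (intro mult_left_mono) auto
    also have "exp (- v / \<sigma>) * exp (- (u - v) / \<sigma>) = exp (- u / \<sigma>)"
      using assms by (subst exp_add[symmetric]) (simp add: field_simps)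
    finally have h: "exp (- v / \<sigma>) * (1 + - (u - v) / \<sigma>) \<le> exp (- u / \<sigma>)" .
    have "exp (- v / \<sigma>) * (1 + - (u - v) / \<sigma>) = exp (- v / \<sigma>) - exp (- v / \<sigma>) / \<sigma> * u + exp (- v / \<sigma>) / \<sigma> * v"
      by (simp add: divide_inverse algebra_simps)
    with h show ?thesis by linarith
  qed
  show ?thesis
    unfolding fsig_def frob_def grad_fsig_def
    apply (simp add: sum_subtractf[symmetric] sum.distrib[symmetric])
    apply (intro sum_mono)
    subgoal for j k using c[of "b $ j $ k" "a $ j $ k"] by (simp add: divide_inverse mult_ac)
    done
qed

theorem theorem29:
  fixes M :: nat
    and A :: "nat \<Rightarrow> ('n::{finite,linorder}, 'n) rmat"
    and B2 :: "nat \<Rightarrow> ('m::finite, 'n) rmat"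
    and B1 :: "('l::finite, 'n) rmat"
    and C :: "('n, 'q::finite) rmat"
    and D :: "('m, 'q) rmat"
    and \<gamma> \<sigma> lam :: real
    and Wt :: "nat \<Rightarrow> ('n + 'm, 'n + 'm) rmat"
    and y :: "nat \<Rightarrow> ('n, 'm) rmat"
  assumes M: "M \<ge> 1"
    and CD: "transpose C ** D = 0"
    and DD: "posdef (transpose D ** D)"
    and BB: "posdef (B1 ** transpose B1)"
    and CC: "posdef (transpose C ** C)"
    and pos: "\<gamma> > 0" "\<sigma> > 0" "lam > 0"
    and init: "Wt 0 \<in> X1 M A B2 B1" "nonneg_mat (y 0)"
    and odd_step: "\<And>r. r \<ge> 1 \<Longrightarrow> odd r \<Longrightarrow>
        Wt r = Wt (r - 1) \<and> y r = grad_fsig \<sigma> (absm (Pmap (Wt (r - 1))))"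
    and even_step: "\<And>r. r \<ge> 1 \<Longrightarrow> even r \<Longrightarrow>
        y r = y (r - 1) \<and> Wt r \<in> X1 M A B2 B1 \<and>
        (\<forall>V \<in> X1 M A B2 B1. Wobj C D \<gamma> lam (y (r - 1)) (Wt (r - 1)) (Wt r)
                            \<le> Wobj C D \<gamma> lam (y (r - 1)) (Wt (r - 1)) V)"
    and Hlim: "lim (\<lambda>r. Hsig M A B2 B1 C D \<gamma> \<sigma> (Wt r))
               = (INF W. Hsig M A B2 B1 C D \<gamma> \<sigma> W)"
  shows "\<forall>Wc. (\<exists>s. strict_mono s \<and> (Wt \<circ> s) \<longlonglongrightarrow> Wc) \<longrightarrow>
           (\<forall>V. Hsig M A B2 B1 C D \<gamma> \<sigma> Wc \<le> Hsig M A B2 B1 C D \<gamma> \<sigma> V)"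
proof (intro allI impI)
  define g where "g W = frob (Rmat C D) W + \<gamma> * fsig \<sigma> (absm (Pmap W))" for W
  have HX: "W \<in> X1 M A B2 B1 \<Longrightarrow> Hsig M A B2 B1 C D \<gamma> \<sigma> W = ereal (g W)" for W
    unfolding Hsig_def g_def by simp
  have inX: "Wt r \<in> X1 M A B2 B1" for r
  proof (induction r)
    case 0 then show ?case using init by simp
  next
    case (Suc r)
    show ?case
    proof (cases "odd (Suc r)")
      case True then show ?thesis using odd_step[of "Suc r"] Suc by simp
    next
      case False then show ?thesis using even_step[of "Suc r"] by simp
    qed
  qed
  have step: "g (Wt (Suc r)) \<le> g (Wt r)" for r
  proof (cases "odd (Suc r)")
    case True then show ?thesis using odd_step[of "Suc r"] by simp
  next
    case False
    then have r1: "r \<ge> 1" "odd r" by (cases r; auto)+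
    have es: "Wt (Suc r) \<in> X1 M A B2 B1" "y (Suc r - 1) = y r"
      "Wobj C D \<gamma> lam (y r) (Wt r) (Wt (Suc r)) \<le> Wobj C D \<gamma> lam (y r) (Wt r) (Wt r)"
      using even_step[of "Suc r"] False inX[of r] by auto
    have os: "Wt r = Wt (r - 1)" "y r = grad_fsig \<sigma> (absm (Pmap (Wt (r - 1))))"
      using odd_step[OF r1] by auto
    define W where "W = Wt r"
    define W' where "W' = Wt (Suc r)"
    have yr: "y r = grad_fsig \<sigma> (absm (Pmap W))" using os W_def by simp
    have conc: "fsig \<sigma> (absm (Pmap W')) \<le> fsig \<sigma> (absm (Pmap W)) + frob (y r) (absm (Pmap W'))
        - frob (y r) (absm (Pmap W))"
      unfolding yr by (rule fsig_concave[OF pos(2)])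
    have ob: "frob (Rmat C D) W' + \<gamma> * frob (y r) (absm (Pmap W')) + (1 / (2 * lam)) * (norm (W' - W))\<^sup>2
        \<le> frob (Rmat C D) W + \<gamma> * frob (y r) (absm (Pmap W))"
      using es(3) unfolding Wobj_def W_def W'_def by simp
    have nn: "0 \<le> (1 / (2 * lam)) * (norm (W' - W))\<^sup>2" using pos(3) by simp
    have "\<gamma> * fsig \<sigma> (absm (Pmap W')) \<le> \<gamma> * (fsig \<sigma> (absm (Pmap W)) + frob (y r) (absm (Pmap W'))
        - frob (y r) (absm (Pmap W)))"
      using conc pos(1) by (intro mult_left_mono) auto
    then have "g W' \<le> g W" unfolding g_def using ob nn by (simp add: algebra_simps)
    then show ?thesis unfolding W_def W'_def .
  qed
  have dec: "decseq (\<lambda>r. Hsig M A B2 B1 C D \<gamma> \<sigma> (Wt r))"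
    unfolding decseq_Suc_iff using step HX inX by simp
  have full: "(\<lambda>r. Hsig M A B2 B1 C D \<gamma> \<sigma> (Wt r)) \<longlonglongrightarrow> (INF r. Hsig M A B2 B1 C D \<gamma> \<sigma> (Wt r))"
    by (rule LIMSEQ_INF[OF dec])
  fix Wc assume "\<exists>s. strict_mono s \<and> (Wt \<circ> s) \<longlonglongrightarrow> Wc"
  then obtain s where s: "strict_mono s" "(Wt \<circ> s) \<longlonglongrightarrow> Wc" by blast
  have WcX: "Wc \<in> X1 M A B2 B1" by (rule X1_closed[OF s(2)]) (simp add: inX)
  have "(\<lambda>k. g ((Wt \<circ> s) k)) \<longlonglongrightarrow> g Wc"
    unfolding g_def Pmap_def
    by (intro tendsto_add tendsto_mult tendsto_const tendsto_frob tendsto_fsig tendsto_absm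
        tendsto_mmult tendsto_transp s(2))
  then have "(\<lambda>k. ereal (g ((Wt \<circ> s) k))) \<longlonglongrightarrow> ereal (g Wc)" by (rule tendsto_ereal)
  then have sub: "((\<lambda>r. Hsig M A B2 B1 C D \<gamma> \<sigma> (Wt r)) \<circ> s) \<longlonglongrightarrow> Hsig M A B2 B1 C D \<gamma> \<sigma> Wc"
    using HX inX WcX by (simp add: comp_def)
  have sub2: "((\<lambda>r. Hsig M A B2 B1 C D \<gamma> \<sigma> (Wt r)) \<circ> s) \<longlonglongrightarrow> (INF r. Hsig M A B2 B1 C D \<gamma> \<sigma> (Wt r))"
    by (rule LIMSEQ_subseq_LIMSEQ[OF full s(1)])
  have "Hsig M A B2 B1 C D \<gamma> \<sigma> Wc = (INF r. Hsig M A B2 B1 C D \<gamma> \<sigma> (Wt r))"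
    using LIMSEQ_unique[OF sub sub2] .
  also have "\<dots> = lim (\<lambda>r. Hsig M A B2 B1 C D \<gamma> \<sigma> (Wt r))"
    using full limI by metis
  also have "\<dots> = (INF W. Hsig M A B2 B1 C D \<gamma> \<sigma> W)" by (rule Hlim)
  finally have eqH: "Hsig M A B2 B1 C D \<gamma> \<sigma> Wc = (INF W. Hsig M A B2 B1 C D \<gamma> \<sigma> W)" .
  show "Hsig M A B2 B1 C D \<gamma> \<sigma> Wc \<le> Hsig M A B2 B1 C D \<gamma> \<sigma> V" for V
    unfolding eqH by (simp add: INF_lower)
qed

end
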